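(* Let $(\mathcal{M},d)$ be an NPC space, $\gamma:[0,1]\to\mathcal{M}$ a geodesic and $\alpha\in[1,2]$. Then for every $\delta\ge0$, $t\in[0,1]$ and $z\in\mathcal{M}$, $$ d(\gamma_t,z)^\alpha\le(1+\delta)^{1-\alpha/2}\left[(1-t)^{\alpha/2}d(\gamma_0,z)^\alpha+t^{\alpha/2}d(\gamma_1,z)^\alpha\right]-\delta^{1-\alpha/2}\left[t(1-t)\,d(\gamma_0,\gamma_1)^2\right]^{\alpha/2}, $$ with the convention $0^0=1$.
   Context: A Polish space $(\mathcal{M},d)$ is an (global) NPC space if for any $x_0,x_1\in\mathcal{M}$ there is $y\in\mathcal{M}$ with $d(z,y)^2\le\frac12d(z,x_0)^2+\frac12d(z,x_1)^2-\frac14d(x_0,x_1)^2$ for all $z\in\mathcal{M}$. A geodesic is a map $\gamma:[0,1]\to\mathcal{M}$ with $d(\gamma_s,\gamma_t)=|s-t|\,d(\gamma_0,\gamma_1)$ for all $s,t$. In NPC spaces any two points are joined by a unique geodesic, and the CN inequality $d(\gamma_t,y)^2\le(1-t)d(\gamma_0,y)^2+t\,d(\gamma_1,y)^2-t(1-t)d(\gamma_0,\gamma_1)^2$ holds. *)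

theory Defs
  imports "HOL-Analysis.Analysis"
begin

definition NPC_space :: "'a::metric_space itself \<Rightarrow> bool" where
  "NPC_space _ \<longleftrightarrow> (\<forall>x0 x1::'a. \<exists>y::'a. \<forall>z::'a.
      (dist z y)^2 \<le> (1/2) * (dist z x0)^2 + (1/2) * (dist z x1)^2 - (1/4) * (dist x0 x1)^2)"

definition geodesic :: "(real \<Rightarrow> 'a::metric_space) \<Rightarrow> bool" where
  "geodesic g \<longleftrightarrow> (\<forall>s\<in>{0..1}. \<forall>t\<in>{0..1}. dist (g s) (g t) = \<bar>s - t\<bar> * dist (g 0) (g 1))"

definition rpow :: "real \<Rightarrow> real \<Rightarrow> real" (infixr "\<^bold>^" 80) where
  "x \<^bold>^ a = (if a = 0 then 1 else x powr a)"

end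

theory Submission
  imports Defs
begin

lemma young0:
  fixes a b p q :: real
  assumes "0 \<le> p" "0 \<le> q" "p + q = 1" "0 \<le> a" "0 \<le> b"
  shows "a powr p * b powr q \<le> p*a + q*b"
proof (cases "a = 0 \<or> b = 0")
  case True then show ?thesis using assms by auto
next
  case False then show ?thesis using Youngs_inequality_0[of p q a b] assms by auto
qed

lemma subadd_powr:
  fixes a b p :: real
  assumes "0 < p" "p \<le> 1" "0 \<le> a" "0 \<le> b"
  shows "(a+b) powr p \<le> a powr p + b powr p"
proof (cases "a + b = 0")
  case True then show ?thesis using assms by auto
next
  case False
  define S where "S = a + b"
  have S: "S > 0" using False assms S_def by auto
  have ka: "(a/S) powr p \<ge> a/S"
    using powr_mono'[of p 1 "a/S"] assms S S_def by (simp add: field_simps)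
  have kb: "(b/S) powr p \<ge> b/S"
    using powr_mono'[of p 1 "b/S"] assms S S_def by (simp add: field_simps)
  have ea: "a powr p = S powr p * (a/S) powr p" using S assms by (simp add: powr_divide)
  have eb: "b powr p = S powr p * (b/S) powr p" using S assms by (simp add: powr_divide)
  have "S powr p * (a/S) + S powr p * (b/S) = S powr p * ((a+b)/S)" by (simp add: add_divide_distrib ring_distribs)
  also have "(a+b)/S = 1" using S S_def by simp
  finally have "S powr p * (a/S) + S powr p * (b/S) = S powr p" by simp
  moreover have "S powr p * (a/S) \<le> a powr p" unfolding ea by (rule mult_left_mono[OF ka]) simp
  moreover have "S powr p * (b/S) \<le> b powr p" unfolding eb by (rule mult_left_mono[OF kb]) simp
  ultimately have "S powr p \<le> a powr p + b powr p" by linarith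
  then show ?thesis using S_def by simp
qed

lemma holder2:
  fixes x y d p q :: real
  assumes "0 < p" "0 \<le> q" "p + q = 1" "0 \<le> x" "0 \<le> y" "0 \<le> d"
  shows "x powr p + y powr p * d powr q \<le> (x+y) powr p * (1+d) powr q"
proof (cases "x + y = 0")
  case True then have "x = 0" "y = 0" using assms by auto
  then show ?thesis using assms by auto
next
  case False
  define S where "S = x + y"
  define T where "T = 1 + d"
  have S: "S > 0" using False assms S_def by auto
  have T: "T > 0" using assms T_def by auto
  have y1: "(x/S) powr p * (1/T) powr q \<le> p*(x/S) + q*(1/T)"
    by (rule young0) (use assms S T in auto)
  have y2: "(y/S) powr p * (d/T) powr q \<le> p*(y/S) + q*(d/T)"
    by (rule young0) (use assms S T in auto)
  have e1: "x powr p = S powr p * T powr q * ((x/S) powr p * (1/T) powr q)"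
    using S T assms by (simp add: powr_divide)
  have e2: "y powr p * d powr q = S powr p * T powr q * ((y/S) powr p * (d/T) powr q)"
    using S T assms by (simp add: powr_divide)
  have P: "S powr p * T powr q \<ge> 0" by simp
  have "x powr p + y powr p * d powr q \<le> S powr p * T powr q * (p*(x/S) + q*(1/T)) + S powr p * T powr q * (p*(y/S) + q*(d/T))"
    unfolding e1 e2 by (intro add_mono mult_left_mono y1 y2 P)
  also have "\<dots> = S powr p * T powr q * ((p*(x/S) + q*(1/T)) + (p*(y/S) + q*(d/T)))"
    by (simp add: distrib_left)
  also have "(p*(x/S) + q*(1/T)) + (p*(y/S) + q*(d/T)) = p*((x+y)/S) + q*((1+d)/T)"
    by (simp add: add_divide_distrib ring_distribs)
  also have "\<dots> = 1" using S T assms S_def T_def by simp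
  finally show ?thesis using S_def T_def by simp
qed

lemma midpt:
  fixes \<gamma> :: "real \<Rightarrow> 'a::metric_space"
  assumes npc: "NPC_space TYPE('a)" and g: "geodesic \<gamma>"
    and s: "0 \<le> s" "s \<le> 1" and u: "0 \<le> u" "u \<le> 1"
  shows "(dist (\<gamma> ((s+u)/2)) z)^2 \<le> (1/2)*(dist (\<gamma> s) z)^2 + (1/2)*(dist (\<gamma> u) z)^2
           - (1/4)*((u-s)*dist (\<gamma> 0) (\<gamma> 1))^2"
proof -
  define D where "D = dist (\<gamma> 0) (\<gamma> 1)"
  define m where "m = (s+u)/2"
  have m: "0 \<le> m" "m \<le> 1" using s u m_def by auto
  obtain y where y: "\<And>w. (dist w y)^2 \<le> (1/2)*(dist w (\<gamma> s))^2 + (1/2)*(dist w (\<gamma> u))^2 - (1/4)*(dist (\<gamma> s) (\<gamma> u))^2"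
    using npc unfolding NPC_space_def by blast
  have G: "\<And>a b. a \<in> {0..1} \<Longrightarrow> b \<in> {0..1} \<Longrightarrow> dist (\<gamma> a) (\<gamma> b) = \<bar>a - b\<bar> * D"
    using g unfolding geodesic_def D_def by blast
  have d1: "dist (\<gamma> m) (\<gamma> s) = \<bar>m - s\<bar> * D" using G[of m s] m s by simp
  have d2: "dist (\<gamma> m) (\<gamma> u) = \<bar>m - u\<bar> * D" using G[of m u] m u by simp
  have d3: "dist (\<gamma> s) (\<gamma> u) = \<bar>s - u\<bar> * D" using G[of s u] s u by simp
  have "(dist (\<gamma> m) y)^2 \<le> (1/2)*(\<bar>m - s\<bar> * D)^2 + (1/2)*(\<bar>m - u\<bar> * D)^2 - (1/4)*(\<bar>s - u\<bar> * D)^2"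
    using y[of "\<gamma> m"] d1 d2 d3 by simp
  also have "\<dots> = ((1/2)*(m-s)^2 + (1/2)*(m-u)^2 - (1/4)*(s-u)^2) * D^2"
    by (simp only: power_mult_distrib power2_abs) (simp add: algebra_simps)
  also have "(1/2)*(m-s)^2 + (1/2)*(m-u)^2 - (1/4)*(s-u)^2 = 0"
    unfolding m_def by (simp add: power2_eq_square field_simps)
  finally have "(dist (\<gamma> m) y)^2 \<le> 0" by simp
  then have "\<gamma> m = y" by simp
  moreover have "(\<bar>s - u\<bar> * D)^2 = ((u-s)*D)^2"
    by (simp only: power_mult_distrib power2_abs) (simp add: power2_commute)
  ultimately show ?thesis using y[of z] d3 unfolding m_def D_def
    by (simp add: dist_commute)
qed

lemma cn:
  fixes \<gamma> :: "real \<Rightarrow> 'a::metric_space"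
  assumes npc: "NPC_space TYPE('a)" and g: "geodesic \<gamma>"
    and t: "0 \<le> t" "t \<le> 1"
  shows "(dist (\<gamma> t) z)^2 \<le> (1-t)*(dist (\<gamma> 0) z)^2 + t*(dist (\<gamma> 1) z)^2 - t*(1-t)*(dist (\<gamma> 0) (\<gamma> 1))^2"
proof -
  define D where "D = dist (\<gamma> 0) (\<gamma> 1)"
  define a where "a = dist (\<gamma> 0) z"
  define b where "b = dist (\<gamma> 1) z"
  define h where "h r = (dist (\<gamma> r) z)^2 - r^2*D^2 - ((1-r)*a^2 + r*(b^2 - D^2))" for r
  have hm: "h ((s+u)/2) \<le> (h s + h u)/2" if s: "s \<in> {0..1}" and u: "u \<in> {0..1}" for s u
  proof -
    have M: "(dist (\<gamma> ((s+u)/2)) z)^2 \<le> (1/2)*(dist (\<gamma> s) z)^2 + (1/2)*(dist (\<gamma> u) z)^2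
           - (1/4)*((u-s)*D)^2" using midpt[OF npc g, of s u z] s u D_def by simp
    have E: "h ((s+u)/2) - (h s + h u)/2 = (dist (\<gamma> ((s+u)/2)) z)^2 - ((1/2)*(dist (\<gamma> s) z)^2 + (1/2)*(dist (\<gamma> u) z)^2
           - (1/4)*((u-s)*D)^2)"
      unfolding h_def by (simp add: power2_eq_square field_simps)
    have "h ((s+u)/2) - (h s + h u)/2 \<le> 0" unfolding E using M by simp
    then show ?thesis by (simp add: field_simps)
  qed
  have G: "\<And>x y. x \<in> {0..1} \<Longrightarrow> y \<in> {0..1} \<Longrightarrow> dist (\<gamma> x) (\<gamma> y) = \<bar>x - y\<bar> * D"
    using g unfolding geodesic_def D_def by blast
  have "D-lipschitz_on {0..1} \<gamma>"
  proof (rule lipschitz_onI)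
    fix x y assume "x \<in> {0..1::real}" "y \<in> {0..1::real}"
    then show "dist (\<gamma> x) (\<gamma> y) \<le> D * dist x y" using G[of x y] by (simp add: dist_real_def mult.commute)
  qed (simp add: D_def)
  then have cg: "continuous_on {0..1} \<gamma>" by (rule lipschitz_on_continuous_on)
  have ch: "continuous_on {0..1} h"
    unfolding h_def by (intro continuous_intros continuous_on_compose2[OF continuous_on_dist[OF continuous_on_id continuous_on_const] cg]) auto
  have h0: "h 0 = 0" and h1: "h 1 = 0" unfolding h_def a_def b_def by simp_all
  have "h t \<le> 0"
  proof (rule ccontr)
    assume "\<not> h t \<le> 0"
    obtain r1 where r1: "r1 \<in> {0..1}" "\<And>y. y \<in> {0..1} \<Longrightarrow> h y \<le> h r1"
      using continuous_attains_sup[OF compact_Icc _ ch] by force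
    define M where "M = h r1"
    have Mpos: "M > 0" using r1(2)[of t] t \<open>\<not> h t \<le> 0\<close> M_def by auto
    define S where "S = {x \<in> {0..1}. h x = M}"
    have "closed S" unfolding S_def by (rule continuous_closed_preimage_constant[OF ch]) simp
    moreover have "bounded S" unfolding S_def by (rule bounded_subset[OF bounded_closed_interval]) auto
    ultimately have "compact S" by (simp add: compact_eq_bounded_closed)
    moreover have "S \<noteq> {}" using r1 M_def S_def by auto
    ultimately obtain r where r: "r \<in> S" "\<And>y. y \<in> S \<Longrightarrow> y \<le> r"
      using continuous_attains_sup[OF _ _ continuous_on_id] by force
    have r01: "0 \<le> r" "r \<le> 1" "h r = M" using r S_def by auto
    have "r \<noteq> 0" "r \<noteq> 1" using r01 h0 h1 Mpos by auto
    define e where "e = min r (1 - r)"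
    have e: "e > 0" "r - e \<in> {0..1}" "r + e \<in> {0..1}" using r01 \<open>r \<noteq> 0\<close> \<open>r \<noteq> 1\<close> e_def by auto
    have "h (r+e) \<noteq> M"
    proof
      assume "h (r+e) = M"
      then have "r + e \<in> S" using e S_def by auto
      then show False using r(2) e by fastforce
    qed
    then have "h (r+e) < M" using r1(2)[OF e(3)] M_def by auto
    moreover have "h (r-e) \<le> M" using r1(2)[OF e(2)] M_def by auto
    moreover have "2 * h r \<le> h (r-e) + h (r+e)" using hm[OF e(2) e(3)] by simp
    ultimately show False using r01 by linarith
  qed
  then have "(dist (\<gamma> t) z)^2 \<le> t^2*D^2 + ((1-t)*a^2 + t*(b^2 - D^2))" unfolding h_def by simp
  moreover have "t^2*D^2 + ((1-t)*a^2 + t*(b^2 - D^2)) = (1-t)*a^2 + t*b^2 - t*(1-t)*D^2"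
    by (simp add: algebra_simps power2_eq_square)
  ultimately show ?thesis unfolding a_def b_def D_def by simp
qed

lemma core:
  fixes F A B C d p :: real
  assumes "0 < p" "p \<le> 1" "0 \<le> F" "0 \<le> A" "0 \<le> B" "0 \<le> C" "0 \<le> d" "F + C \<le> A + B"
  shows "F powr p \<le> (1+d) powr (1-p) * (A powr p + B powr p) - d powr (1-p) * C powr p"
proof -
  have "F powr p + C powr p * d powr (1-p) \<le> (F+C) powr p * (1+d) powr (1-p)"
    by (rule holder2) (use assms in auto)
  also have "\<dots> \<le> (A+B) powr p * (1+d) powr (1-p)"
    by (intro mult_right_mono powr_mono2) (use assms in auto)
  also have "\<dots> \<le> (A powr p + B powr p) * (1+d) powr (1-p)"
    by (intro mult_right_mono subadd_powr) (use assms in auto)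
  finally show ?thesis by (simp add: algebra_simps)
qed

lemma sq_powr: "0 \<le> (x::real) \<Longrightarrow> 0 < p \<Longrightarrow> (x^2) powr p = x powr (2*p)"
proof (cases "x = 0")
  case False
  assume "0 \<le> x" "0 < p"
  then have "x > 0" using False by auto
  then have "x^2 = x powr 2" using powr_realpow[of x 2] by simp
  then have "(x^2) powr p = (x powr 2) powr p" by (simp only:)
  also have "\<dots> = x powr (2*p)" by (rule powr_powr)
  finally show ?thesis .
qed simp

theorem proposition4p1:
  fixes \<gamma> :: "real \<Rightarrow> 'a::polish_space"
    and \<alpha> \<delta> t :: real and z :: 'a
  assumes "NPC_space TYPE('a)"
    and "geodesic \<gamma>"
    and "1 \<le> \<alpha>" "\<alpha> \<le> 2"
    and "0 \<le> \<delta>"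
    and "0 \<le> t" "t \<le> 1"
  shows "dist (\<gamma> t) z \<^bold>^ \<alpha> \<le>
     (1 + \<delta>) \<^bold>^ (1 - \<alpha>/2) *
       ((1 - t) \<^bold>^ (\<alpha>/2) * dist (\<gamma> 0) z \<^bold>^ \<alpha> + t \<^bold>^ (\<alpha>/2) * dist (\<gamma> 1) z \<^bold>^ \<alpha>)
     - \<delta> \<^bold>^ (1 - \<alpha>/2) * (t * (1 - t) * (dist (\<gamma> 0) (\<gamma> 1))^2) \<^bold>^ (\<alpha>/2)"
proof -
  define p where "p = \<alpha>/2"
  have p: "0 < p" "p \<le> 1" "\<alpha> = 2*p" using assms p_def by auto
  define F where "F = (dist (\<gamma> t) z)^2"
  define A where "A = (1-t) * (dist (\<gamma> 0) z)^2"
  define B where "B = t * (dist (\<gamma> 1) z)^2"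
  define C where "C = t * (1 - t) * (dist (\<gamma> 0) (\<gamma> 1))^2"
  have nn: "0 \<le> F" "0 \<le> A" "0 \<le> B" "0 \<le> C" using assms unfolding F_def A_def B_def C_def by auto
  have cn': "F \<le> A + B - C" using cn[OF assms(1,2) assms(6,7), of z] unfolding F_def A_def B_def C_def by simp
  have a0: "\<alpha> \<noteq> 0" "\<alpha>/2 \<noteq> 0" using assms by auto
  have eF: "dist (\<gamma> t) z \<^bold>^ \<alpha> = F powr p" unfolding rpow_def F_def using p by (simp add: sq_powr)
  have eA: "(1 - t) \<^bold>^ (\<alpha>/2) * dist (\<gamma> 0) z \<^bold>^ \<alpha> = A powr p"
    unfolding rpow_def A_def using p assms by (simp add: sq_powr powr_mult)
  have eB: "t \<^bold>^ (\<alpha>/2) * dist (\<gamma> 1) z \<^bold>^ \<alpha> = B powr p"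
    unfolding rpow_def B_def using p assms by (simp add: sq_powr powr_mult)
  have eC: "(t * (1 - t) * (dist (\<gamma> 0) (\<gamma> 1))^2) \<^bold>^ (\<alpha>/2) = C powr p"
    unfolding rpow_def C_def using p by simp
  show ?thesis
  proof (cases "\<alpha> = 2")
    case True
    then have "p = 1" using p by simp
    then show ?thesis unfolding eF eA eB eC using True nn cn' by (simp add: rpow_def)
  next
    case False
    then have "1 - \<alpha>/2 \<noteq> 0" by simp
    then have e1: "(1 + \<delta>) \<^bold>^ (1 - \<alpha>/2) = (1+\<delta>) powr (1-p)" "\<delta> \<^bold>^ (1 - \<alpha>/2) = \<delta> powr (1-p)"
      unfolding rpow_def using p by auto
    show ?thesis unfolding eF eA eB eC e1
      by (rule core) (use p nn cn' assms in auto)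
  qed
qed

end
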